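(* There is an absolute constant $c>0$ such that for every comparison-based search algorithm $A$ (deterministic or randomized) that takes a predicted distribution $\hat p$ on $[n]$ and a target key and locates the target among sorted keys $a_1<\dots<a_n$, and for every $n\ge1$, every $h\in[0,\log n]$ and every $\eta\in[1,n]$: the supremum of the expected number of comparisons made by $A$, taken over all instances $(p,\hat p)$ of distributions on $[n]$ with $H(p)\le h$ and earth mover's distance between $p$ and $\hat p$ at most $\eta$ (target $a=a_i$ drawn with probability $p_i$), is at least $c\,(h+\log\eta)$. In particular, the worst-case expected query complexity of any such algorithm is $\Omega(H(p)+\log\eta)$.
   Context: All logarithms are base 2. $H(p)=-\sum_i p_i\log p_i$ is the entropy. The earth mover's distance between distributions $P,Q$ on $[n]$ is $\inf_{\gamma\in\Pi(P,Q)}\mathbb{E}_{(x,y)\sim\gamma}|x-y|$, with $\Pi(P,Q)$ the set of couplings of $P$ and $Q$. A comparison of the target $a$ with a key $a_j$ returns whether $a<a_j$, $a=a_j$ or $a>a_j$ and counts as one query. (The paper combines its lower bound $\Omega(\log\eta)$ for instances with $H(p)=0$ with the known fact that any comparison-based search needs $\Omega(H(p))$ expected comparisons even when $\hat p=p$.) *)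

theory Defs
  imports "HOL-Probability.Probability"
begin

text \<open>Comparison decision trees over sorted keys a_1 < ... < a_n.
  A node Node j l e g compares the target a with the key a_j and continues
  in l, e or g according as a < a_j, a = a_j or a > a_j.
  Since the keys are sorted and the target is a = a_i, the comparison of a with a_j
  has the same outcome as comparing the indices i and j.\<close>

datatype dtree = Leaf nat | Node nat dtree dtree dtree

fun dt_output :: "dtree \<Rightarrow> nat \<Rightarrow> nat" where
  "dt_output (Leaf k) i = k"
| "dt_output (Node j l e g) i =
     (if i < j then dt_output l i else if i = j then dt_output e i else dt_output g i)"

fun dt_cost :: "dtree \<Rightarrow> nat \<Rightarrow> nat" where
  "dt_cost (Leaf k) i = 0"
| "dt_cost (Node j l e g) i =
     Suc (if i < j then dt_cost l i else if i = j then dt_cost e i else dt_cost g i)"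

text \<open>A (possibly randomized) comparison-based search algorithm for n keys maps the
  predicted distribution to a distribution over deterministic decision trees.\<close>
definition correct_search :: "nat \<Rightarrow> (nat pmf \<Rightarrow> dtree pmf) \<Rightarrow> bool" where
  "correct_search n A \<longleftrightarrow>
     (\<forall>q. set_pmf q \<subseteq> {1..n} \<longrightarrow>
        (\<forall>T \<in> set_pmf (A q). \<forall>i \<in> {1..n}. dt_output T i = i))"

definition expected_cost :: "(nat pmf \<Rightarrow> dtree pmf) \<Rightarrow> nat pmf \<Rightarrow> nat pmf \<Rightarrow> ennreal" where
  "expected_cost A p q =
     (\<integral>\<^sup>+ T. (\<integral>\<^sup>+ i. ennreal (real (dt_cost T i)) \<partial>measure_pmf p) \<partial>measure_pmf (A q))"

text \<open>Shannon entropy (base 2) of a distribution on [n]; note 0 * log 2 0 = 0.\<close>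
definition entropy2 :: "nat \<Rightarrow> nat pmf \<Rightarrow> real" where
  "entropy2 n p = - (\<Sum>i\<in>{1..n}. pmf p i * log 2 (pmf p i))"

definition couplings :: "nat pmf \<Rightarrow> nat pmf \<Rightarrow> (nat \<times> nat) pmf set" where
  "couplings P Q = {\<gamma>. map_pmf fst \<gamma> = P \<and> map_pmf snd \<gamma> = Q}"

definition emd :: "nat pmf \<Rightarrow> nat pmf \<Rightarrow> real" where
  "emd P Q = (INF \<gamma>\<in>couplings P Q.
      measure_pmf.expectation \<gamma> (\<lambda>(x, y). \<bar>real x - real y\<bar>))"

end

theory Submission
  imports Defs
begin


lemma count_le:
  assumes "finite S" "\<forall>i\<in>S. dt_output T i = i"
  shows "card {i\<in>S. dt_cost T i \<le> d} \<le> 3 ^ d"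
  using assms
proof (induction T arbitrary: S d)
  case (Leaf k)
  have "{i\<in>S. dt_cost (Leaf k) i \<le> d} \<subseteq> {k}" using Leaf by auto
  then have "card {i\<in>S. dt_cost (Leaf k) i \<le> d} \<le> 1"
    using card_mono[of "{k}"] by fastforce
  then show ?case by (meson dual_order.trans one_le_power one_le_numeral)
next
  case (Node j l e g)
  show ?case
  proof (cases d)
    case 0
    then show ?thesis by simp
  next
    case (Suc d')
    let ?A = "{i\<in>{i\<in>S. i<j}. dt_cost l i \<le> d'}"
    let ?B = "{i\<in>{i\<in>S. i=j}. dt_cost e i \<le> d'}"
    let ?C = "{i\<in>{i\<in>S. j<i}. dt_cost g i \<le> d'}"
    have sub: "{i\<in>S. dt_cost (Node j l e g) i \<le> d} \<subseteq> ?A \<union> ?B \<union> ?C"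
    proof
      fix i assume i: "i \<in> {i\<in>S. dt_cost (Node j l e g) i \<le> d}"
      show "i \<in> ?A \<union> ?B \<union> ?C"
      proof (cases i j rule: linorder_cases)
        case less then show ?thesis using i Suc by auto
      next
        case equal then show ?thesis using i Suc by auto
      next
        case greater then show ?thesis using i Suc by auto
      qed
    qed
    have fin: "finite ?A" "finite ?B" "finite ?C" using Node.prems by auto
    have a: "card ?A \<le> 3^d'"
      by (rule Node.IH(1)) (use Node.prems in \<open>auto split: if_splits\<close>)
    have b: "card ?B \<le> 3^d'"
      by (rule Node.IH(2)) (use Node.prems in \<open>auto split: if_splits\<close>)
    have c: "card ?C \<le> 3^d'"
      by (rule Node.IH(3)) (use Node.prems in \<open>fastforce split: if_splits\<close>)+
    have "card {i\<in>S. dt_cost (Node j l e g) i \<le> d} \<le> card (?A \<union> ?B \<union> ?C)"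
      using sub fin by (intro card_mono) auto
    also have "\<dots> \<le> card ?A + card ?B + card ?C"
      by (metis (no_types, lifting) add_le_mono card_Un_le dual_order.trans le_refl)
    also have "\<dots> \<le> 3^d" using a b c Suc by simp
    finally show ?thesis .
  qed
qed

lemma sum_lower:
  assumes "finite S" "\<forall>i\<in>S. dt_output T i = i"
  shows "(real (card S) - 3 ^ d) * (real d + 1) \<le> (\<Sum>i\<in>S. real (dt_cost T i))"
proof -
  let ?L = "{i\<in>S. dt_cost T i \<le> d}" and ?H = "{i\<in>S. \<not> dt_cost T i \<le> d}"
  have cl: "card ?L \<le> 3^d" using count_le assms by blast
  have "S = ?L \<union> ?H" by auto
  have "card ?L + card ?H = card (?L \<union> ?H)"
    by (rule card_Un_disjoint[symmetric]) (use assms(1) in auto)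
  then have e: "real (card S) = real (card ?L) + real (card ?H)"
    using \<open>S = ?L \<union> ?H\<close> by (metis of_nat_add)
  have "real (card ?L) \<le> 3^d" using cl
    by (metis of_nat_le_iff of_nat_numeral of_nat_power)
  then have cH: "real (card S) - 3^d \<le> real (card ?H)" using e by linarith
  have "(real (card S) - 3 ^ d) * (real d + 1) \<le> real (card ?H) * (real d + 1)"
    using cH by (intro mult_right_mono) auto
  also have "\<dots> = (\<Sum>i\<in>?H. real d + 1)" by simp
  also have "\<dots> \<le> (\<Sum>i\<in>?H. real (dt_cost T i))"
    by (intro sum_mono) auto
  also have "\<dots> \<le> (\<Sum>i\<in>S. real (dt_cost T i))"
    using assms(1) by (intro sum_mono2) auto
  finally show ?thesis .
qed

lemma cost_pos:
  assumes "\<forall>i\<in>{1..n}. dt_output T i = i" "n \<ge> 2"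
  shows "dt_cost T i \<ge> 1"
proof (cases T)
  case (Leaf k)
  have "dt_output T 1 = 1" "dt_output T 2 = 2" using assms by auto
  then show ?thesis using Leaf by simp
qed simp

lemma log_pow_bracket:
  fixes k :: nat assumes "k \<ge> 1"
  shows "\<exists>m. 3^m \<le> k \<and> k < 3^(Suc m)"
  using assms
proof (induction k rule: less_induct)
  case (less k)
  show ?case
  proof (cases "k < 3")
    case True then show ?thesis using less.prems by (intro exI[of _ 0]) auto
  next
    case False
    have "k div 3 \<ge> 1" "k div 3 < k" using False by auto
    then obtain m where m: "3^m \<le> k div 3" "k div 3 < 3^Suc m"
      using less.IH[of "k div 3"] by blast
    have "3^Suc m \<le> k"
    proof -
      have "3^Suc m = 3 * 3^m" by simp
      also have "\<dots> \<le> 3 * (k div 3)" using m(1) by simp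
      also have "\<dots> \<le> k" by simp
      finally show ?thesis .
    qed
    moreover have "k < 3^Suc (Suc m)"
    proof -
      have "k div 3 + 1 \<le> 3^Suc m" using m(2) by simp
      then have "3 * (k div 3) + 3 \<le> 3 * 3^Suc m" by simp
      moreover have "k < 3 * (k div 3) + 3" by simp
      ultimately show ?thesis by simp
    qed
    ultimately show ?thesis by blast
  qed
qed

definition lb :: "nat \<Rightarrow> real" where "lb k = max 1 (log 2 (real k) / 6)"

lemma sum_lb:
  assumes "finite S" "S \<noteq> {}" "S \<subseteq> {1..n}" "n \<ge> 2" "\<forall>i\<in>{1..n}. dt_output T i = i"
  shows "real (card S) * lb (card S) \<le> (\<Sum>i\<in>S. real (dt_cost T i))"
proof -
  define k where "k = card S"
  have k1: "k \<ge> 1" using assms k_def by (simp add: Suc_leI card_gt_0_iff)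
  have corr: "\<forall>i\<in>S. dt_output T i = i" using assms by auto
  have one: "real k \<le> (\<Sum>i\<in>S. real (dt_cost T i))"
  proof -
    have "real k = (\<Sum>i\<in>S. 1)" using k_def by simp
    also have "\<dots> \<le> (\<Sum>i\<in>S. real (dt_cost T i))"
      using cost_pos[OF assms(5,4)] by (intro sum_mono) auto
    finally show ?thesis .
  qed
  obtain m where m: "3^m \<le> k" "k < 3^(Suc m)" using log_pow_bracket k1 by blast
  have lk: "log 2 (real k) < 2 * (real m + 1)"
  proof -
    have "log 2 (real k) < log 2 (3^Suc m)"
      using m k1 by (subst log_less_cancel_iff) (auto simp del: power_Suc)
    also have "\<dots> = real (Suc m) * log 2 3" by (simp add: log_nat_power del: power_Suc)
    also have "\<dots> \<le> real (Suc m) * 2"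
    proof -
      have "log 2 3 \<le> log 2 (4::real)" by simp
      also have "log 2 (4::real) = 2"
        by (metis log2_of_power_eq mult_2 numeral_Bit0 of_nat_numeral power2_eq_square)
      finally show ?thesis by (intro mult_left_mono) auto
    qed
    finally show ?thesis by simp
  qed
  have main: "real k * (log 2 (real k) / 6) \<le> (\<Sum>i\<in>S. real (dt_cost T i))"
  proof (cases m)
    case 0
    then have "log 2 (real k) / 6 \<le> 1" using lk by simp
    then have "real k * (log 2 (real k) / 6) \<le> real k"
      by (metis mult.right_neutral mult_left_mono of_nat_0_le_iff)
    then show ?thesis using one by linarith
  next
    case (Suc d)
    have s: "(real k - 3 ^ d) * (real d + 1) \<le> (\<Sum>i\<in>S. real (dt_cost T i))"
      using sum_lower[OF assms(1) corr] k_def by blast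
    have "3 * 3^d \<le> real k" using m Suc
      by (metis of_nat_le_iff of_nat_numeral of_nat_power power_Suc of_nat_mult)
    then have "real k * (2/3) * (real d + 1) \<le> (real k - 3 ^ d) * (real d + 1)"
      by (intro mult_right_mono) auto
    moreover have "real k * (log 2 (real k) / 6) \<le> real k * (2/3) * (real d + 1)"
    proof -
      have "log 2 (real k) / 6 \<le> (2/3) * (real d + 1)" using lk Suc by simp
      then show ?thesis by (metis mult.assoc mult_left_mono of_nat_0_le_iff)
    qed
    ultimately show ?thesis using s by linarith
  qed
  show ?thesis unfolding lb_def k_def[symmetric]
    using main one by (simp add: max_def)
qed


lemma lb_nonneg: "0 \<le> lb k" unfolding lb_def by simp

lemma avg_lb:
  assumes cs: "correct_search n A" and q: "set_pmf q \<subseteq> {1..n}" and n2: "n \<ge> 2"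
    and S: "finite S" "S \<noteq> {}" "S \<subseteq> {1..n}"
  shows "ennreal (lb (card S)) \<le> expected_cost A (pmf_of_set S) q"
proof -
  have corrT: "\<forall>T\<in>set_pmf (A q). \<forall>i\<in>{1..n}. dt_output T i = i"
    using cs q unfolding correct_search_def by blast
  have kpos: "real (card S) > 0" using S by (simp add: card_gt_0_iff)
  have inner: "ennreal (lb (card S)) \<le> (\<integral>\<^sup>+ i. ennreal (real (dt_cost T i)) \<partial>measure_pmf (pmf_of_set S))"
    if T: "T \<in> set_pmf (A q)" for T
  proof -
    have s: "real (card S) * lb (card S) \<le> (\<Sum>i\<in>S. real (dt_cost T i))"
      using sum_lb[OF S n2] corrT T by blast
    have "(\<integral>\<^sup>+ i. ennreal (real (dt_cost T i)) \<partial>measure_pmf (pmf_of_set S))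
        = (\<Sum>i\<in>S. ennreal (real (dt_cost T i))) / of_nat (card S)"
      using S by (simp add: nn_integral_pmf_of_set)
    also have "\<dots> = ennreal ((\<Sum>i\<in>S. real (dt_cost T i)) / real (card S))"
      using kpos by (simp add: sum_ennreal ennreal_of_nat_eq_real_of_nat) (intro divide_ennreal sum_nonneg, auto)
    finally have e: "(\<integral>\<^sup>+ i. ennreal (real (dt_cost T i)) \<partial>measure_pmf (pmf_of_set S))
        = ennreal ((\<Sum>i\<in>S. real (dt_cost T i)) / real (card S))" .
    have "lb (card S) \<le> (\<Sum>i\<in>S. real (dt_cost T i)) / real (card S)"
      using s kpos by (simp add: pos_le_divide_eq mult.commute)
    then show ?thesis unfolding e by (rule ennreal_leI)
  qed
  have "ennreal (lb (card S)) = (\<integral>\<^sup>+ T. ennreal (lb (card S)) \<partial>measure_pmf (A q))"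
    by (simp add: measure_pmf.emeasure_space_1)
  also have "\<dots> \<le> expected_cost A (pmf_of_set S) q"
    unfolding expected_cost_def
    by (rule nn_integral_mono_AE) (use inner in \<open>simp add: AE_measure_pmf_iff\<close>)
  finally show ?thesis .
qed

lemma sum_E_lb:
  assumes cs: "correct_search n A" and q: "set_pmf q \<subseteq> {1..n}" and n2: "n \<ge> 2"
    and S: "finite S" "S \<noteq> {}" "S \<subseteq> {1..n}"
  shows "ennreal (real (card S) * lb (card S)) \<le>
     (\<Sum>i\<in>S. \<integral>\<^sup>+ T. ennreal (real (dt_cost T i)) \<partial>measure_pmf (A q))"
proof -
  have corrT: "\<forall>T\<in>set_pmf (A q). \<forall>i\<in>{1..n}. dt_output T i = i"
    using cs q unfolding correct_search_def by blast
  have "ennreal (real (card S) * lb (card S)) = (\<integral>\<^sup>+ T. ennreal (real (card S) * lb (card S)) \<partial>measure_pmf (A q))"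
    by (simp add: measure_pmf.emeasure_space_1)
  also have "\<dots> \<le> (\<integral>\<^sup>+ T. (\<Sum>i\<in>S. ennreal (real (dt_cost T i))) \<partial>measure_pmf (A q))"
  proof (rule nn_integral_mono_AE)
    show "AE T in measure_pmf (A q). ennreal (real (card S) * lb (card S)) \<le> (\<Sum>i\<in>S. ennreal (real (dt_cost T i)))"
      unfolding AE_measure_pmf_iff
    proof
      fix T assume T: "T \<in> set_pmf (A q)"
      have "real (card S) * lb (card S) \<le> (\<Sum>i\<in>S. real (dt_cost T i))"
        using sum_lb[OF S n2] corrT T by blast
      then show "ennreal (real (card S) * lb (card S)) \<le> (\<Sum>i\<in>S. ennreal (real (dt_cost T i)))"
        by (simp add: sum_ennreal ennreal_leI)
    qed
  qed
  also have "\<dots> = (\<Sum>i\<in>S. \<integral>\<^sup>+ T. ennreal (real (dt_cost T i)) \<partial>measure_pmf (A q))"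
    by (rule nn_integral_sum) simp
  finally show ?thesis .
qed

lemma emd_le:
  assumes "map_pmf fst \<gamma> = P" "map_pmf snd \<gamma> = Q"
    "measure_pmf.expectation \<gamma> (\<lambda>(x, y). \<bar>real x - real y\<bar>) \<le> t"
  shows "emd P Q \<le> t"
  unfolding emd_def
proof (rule cINF_lower2[of _ _ \<gamma>])
  show "bdd_below ((\<lambda>\<gamma>. measure_pmf.expectation \<gamma> (\<lambda>(x, y). \<bar>real x - real y\<bar>)) ` couplings P Q)"
    by (rule bdd_belowI2[where m=0]) (auto intro!: Bochner_Integration.integral_nonneg split: prod.splits)
qed (use assms in \<open>auto simp: couplings_def\<close>)

lemma entropy_uniform:
  assumes "1 \<le> k" "k \<le> n"
  shows "entropy2 n (pmf_of_set {1..k}) = log 2 (real k)"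
proof -
  have "(\<Sum>i\<in>{1..n}. pmf (pmf_of_set {1..k}) i * log 2 (pmf (pmf_of_set {1..k}) i))
      = (\<Sum>i\<in>{1..k}. (1 / real k) * log 2 (1 / real k))"
  proof (rule sum.mono_neutral_cong_right)
    show "\<forall>i\<in>{1..n} - {1..k}. pmf (pmf_of_set {1..k}) i * log 2 (pmf (pmf_of_set {1..k}) i) = 0"
      using assms by (auto simp: pmf_of_set)
    show "\<And>x. x \<in> {1..k} \<Longrightarrow> pmf (pmf_of_set {1..k}) x * log 2 (pmf (pmf_of_set {1..k}) x) = 1 / real k * log 2 (1 / real k)"
      using assms by (auto simp: pmf_of_set)
  qed (use assms in auto)
  also have "\<dots> = - log 2 (real k)"
    using assms by (simp add: log_divide)
  finally show ?thesis unfolding entropy2_def by simp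
qed

lemma entropy_return:
  "entropy2 n (return_pmf i) = 0"
proof -
  have "\<And>x. pmf (return_pmf i) x * log 2 (pmf (return_pmf i) x) = 0"
    by (simp add: indicator_def)
  then show ?thesis unfolding entropy2_def by simp
qed



theorem corollary3p3:
  shows "\<exists>c::real. c > 0 \<and>
    (\<forall>n::nat. \<forall>A. \<forall>h::real. \<forall>\<eta>::real.
      n \<ge> 1 \<longrightarrow> correct_search n A \<longrightarrow>
      0 \<le> h \<longrightarrow> h \<le> log 2 (real n) \<longrightarrow> 1 \<le> \<eta> \<longrightarrow> \<eta> \<le> real n \<longrightarrow>
      (SUP pq\<in>{(p, q). set_pmf p \<subseteq> {1..n} \<and> set_pmf q \<subseteq> {1..n} \<and>
                        entropy2 n p \<le> h \<and> emd p q \<le> \<eta>}.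
          expected_cost A (fst pq) (snd pq))
        \<ge> ennreal (c * (h + log 2 \<eta>)))"
proof (intro exI[of _ "1/24"] conjI allI impI)
  fix n :: nat and A h and \<eta> :: real
  assume n1: "n \<ge> 1" and cs: "correct_search n A" and h0: "0 \<le> h" and hn: "h \<le> log 2 (real n)"
    and e1: "1 \<le> \<eta>" and en: "\<eta> \<le> real n"
  define Inst where "Inst = {(p, q). set_pmf p \<subseteq> {1..n} \<and> set_pmf q \<subseteq> {1..n} \<and>
                        entropy2 n p \<le> h \<and> emd p q \<le> \<eta>}"
  define M where "M = (SUP pq\<in>Inst. expected_cost A (fst pq) (snd pq))"
  have upper: "expected_cost A p q \<le> M" if "(p, q) \<in> Inst" for p q
    unfolding M_def using SUP_upper[OF that, of "\<lambda>pq. expected_cost A (fst pq) (snd pq)"] by simp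
  have main: "ennreal (1/24 * (h + log 2 \<eta>)) \<le> M"
  proof (cases "n = 1")
    case True
    then have "h = 0" "\<eta> = 1" using h0 hn e1 en by auto
    then show ?thesis by simp
  next
    case False
    then have n2: "n \<ge> 2" using n1 by auto
    define fh where "fh = nat \<lfloor>h\<rfloor>"
    define k1 where "k1 = (2::nat) ^ fh"
    have fh_le: "real fh \<le> h" using h0 unfolding fh_def by linarith
    have fh_gt: "h - 1 < real fh" using h0 unfolding fh_def by linarith
    have k1_real: "real k1 = 2 ^ fh" unfolding k1_def by simp
    have logk1: "log 2 (real k1) = real fh" unfolding k1_real by (simp add: log_nat_power)
    have k1_1: "1 \<le> k1" unfolding k1_def by simp
    have k1_n: "k1 \<le> n"
    proof -
      have "real k1 = 2 powr real fh" unfolding k1_real by (simp add: powr_realpow)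
      also have "\<dots> \<le> 2 powr (log 2 (real n))" using fh_le hn by (intro powr_mono) auto
      also have "\<dots> = real n" using n1 by simp
      finally show ?thesis by simp
    qed
    have S1: "finite {1..k1}" "{1..k1} \<noteq> {}" "{1..k1} \<subseteq> {1..n}" using k1_1 k1_n by auto
    have mem1: "(pmf_of_set {1..k1}, pmf_of_set {1..k1}) \<in> Inst"
    proof -
      have a: "set_pmf (pmf_of_set {1..k1}) \<subseteq> {1..n}" using S1 by simp
      have b: "entropy2 n (pmf_of_set {1..k1}) \<le> h"
        using entropy_uniform[OF k1_1 k1_n] logk1 fh_le by simp
      have c: "emd (pmf_of_set {1..k1}) (pmf_of_set {1..k1}) \<le> \<eta>"
        by (rule emd_le[of "map_pmf (\<lambda>x. (x, x)) (pmf_of_set {1..k1})"])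
           (use e1 in \<open>simp_all add: pmf.map_comp o_def integral_map_pmf\<close>)
      show ?thesis unfolding Inst_def using a b c by blast
    qed
    have p1: "ennreal (lb k1) \<le> M"
    proof -
      have "ennreal (lb (card {1..k1})) \<le> expected_cost A (pmf_of_set {1..k1}) (pmf_of_set {1..k1})"
        using avg_lb[OF cs _ n2 S1] S1 by simp
      then show ?thesis using upper[OF mem1] by simp
    qed
    have l1: "h / 12 \<le> lb k1"
      unfolding lb_def logk1 using fh_gt by (cases "h \<le> 2") auto
    define k2 where "k2 = nat \<lfloor>\<eta>\<rfloor>"
    have k2_le: "real k2 \<le> \<eta>" using e1 unfolding k2_def by linarith
    have k2_gt: "\<eta> - 1 < real k2" using e1 unfolding k2_def by linarith
    have k2_1: "1 \<le> k2" using e1 unfolding k2_def by linarith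
    have k2_n: "k2 \<le> n" using k2_le en by linarith
    have k2_half: "\<eta> / 2 \<le> real k2" using k2_gt k2_1 by linarith
    have S2: "finite {1..k2}" "{1..k2} \<noteq> {}" "{1..k2} \<subseteq> {1..n}" using k2_1 k2_n by auto
    define q where "q = pmf_of_set {1..k2}"
    have q_set: "set_pmf q \<subseteq> {1..n}" using S2 unfolding q_def by simp
    have mem2: "(return_pmf i, q) \<in> Inst" if i: "i \<in> {1..k2}" for i
    proof -
      have a: "set_pmf (return_pmf i) \<subseteq> {1..n}" using i k2_n by auto
      have b: "entropy2 n (return_pmf i) \<le> h" using h0 by (simp add: entropy_return)
      have c: "emd (return_pmf i) q \<le> \<eta>"
      proof (rule emd_le[of "map_pmf (\<lambda>y. (i, y)) q"])
        show "map_pmf fst (map_pmf (\<lambda>y. (i, y)) q) = return_pmf i"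
          by (simp add: pmf.map_comp o_def map_pmf_const)
        show "map_pmf snd (map_pmf (\<lambda>y. (i, y)) q) = q"
          by (simp add: pmf.map_comp o_def)
        have "measure_pmf.expectation (map_pmf (\<lambda>y. (i, y)) q) (\<lambda>(x, y). \<bar>real x - real y\<bar>)
            = (\<Sum>y\<in>{1..k2}. \<bar>real i - real y\<bar>) / real k2"
          unfolding q_def using S2 by (simp add: integral_map_pmf integral_pmf_of_set)
        also have "\<dots> \<le> \<eta>"
        proof -
          have "(\<Sum>y\<in>{1..k2}. \<bar>real i - real y\<bar>) \<le> (\<Sum>y\<in>{1..k2}. \<eta>)"
            using i k2_le by (intro sum_mono) auto
          then have "(\<Sum>y\<in>{1..k2}. \<bar>real i - real y\<bar>) \<le> real k2 * \<eta>" by simp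
          then show ?thesis using k2_1 by (simp add: divide_le_eq mult.commute)
        qed
        finally show "measure_pmf.expectation (map_pmf (\<lambda>y. (i, y)) q) (\<lambda>(x, y). \<bar>real x - real y\<bar>) \<le> \<eta>" .
      qed
      show ?thesis unfolding Inst_def using a b c q_set by blast
    qed
    have p2: "ennreal (lb k2) \<le> M"
    proof -
      have "ennreal (real k2 * lb k2) \<le> (\<Sum>i\<in>{1..k2}. \<integral>\<^sup>+ T. ennreal (real (dt_cost T i)) \<partial>measure_pmf (A q))"
        using sum_E_lb[OF cs q_set n2 S2] by simp
      also have "\<dots> \<le> (\<Sum>i\<in>{1..k2}. M)"
      proof (rule sum_mono)
        fix i assume i: "i \<in> {1..k2}"
        have "(\<integral>\<^sup>+ T. ennreal (real (dt_cost T i)) \<partial>measure_pmf (A q)) = expected_cost A (return_pmf i) q"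
          unfolding expected_cost_def by (simp add: nn_integral_return_pmf)
        also have "\<dots> \<le> M" by (rule upper[OF mem2[OF i]])
        finally show "(\<integral>\<^sup>+ T. ennreal (real (dt_cost T i)) \<partial>measure_pmf (A q)) \<le> M" .
      qed
      also have "\<dots> = ennreal (real k2) * M" by (simp add: ennreal_of_nat_eq_real_of_nat)
      finally have "ennreal (real k2) * ennreal (lb k2) \<le> ennreal (real k2) * M"
        using ennreal_mult[of "real k2" "lb k2"] lb_nonneg by simp
      then show ?thesis using k2_1 by (subst (asm) ennreal_mult_le_mult_iff) auto
    qed
    have l2: "log 2 \<eta> / 12 \<le> lb k2"
    proof -
      have "log 2 (\<eta> / 2) \<le> log 2 (real k2)" using k2_half e1 by simp
      then have "log 2 \<eta> - 1 \<le> log 2 (real k2)" using e1 by (simp add: log_divide)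
      then show ?thesis unfolding lb_def by (cases "log 2 \<eta> \<le> 2") auto
    qed
    have "1/24 * (h + log 2 \<eta>) \<le> max (lb k1) (lb k2)"
      using l1 l2 max.cobounded1[of "lb k1" "lb k2"] max.cobounded2[of "lb k2" "lb k1"]
      by (simp add: algebra_simps)
    then have "ennreal (1/24 * (h + log 2 \<eta>)) \<le> ennreal (max (lb k1) (lb k2))"
      by (rule ennreal_leI)
    also have "\<dots> \<le> M" using p1 p2 by (simp add: max_def)
    finally show ?thesis .
  qed
  then show "ennreal (1/24 * (h + log 2 \<eta>)) \<le> (SUP pq\<in>{(p, q). set_pmf p \<subseteq> {1..n} \<and> set_pmf q \<subseteq> {1..n} \<and>
                        entropy2 n p \<le> h \<and> emd p q \<le> \<eta>}.
          expected_cost A (fst pq) (snd pq))"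
    unfolding M_def Inst_def .
qed simp


end
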